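(* Let $A=(V,\mathcal E)$ be a finite tree (with at least one vertex). Consider the following three triples $(B,\mathcal R,G)\subset V\times\mathcal E\times V$ (more precisely $B\subseteq V$, $\mathcal R\subseteq \mathcal E$, $G\subseteq V$): (i) $B$ is the positive vertex-backbone of $A$, $\mathcal R$ is the set of exclusive edges of $A$, and $G$ is the negative vertex-backbone of $A$; (ii) $B$ is the set of unavoidable vertices of $A$, $\mathcal R$ is the positive edge-backbone of $A$, and $G$ is the set of optional vertices of $A$; (iii) a tricoloring $(B,\mathcal R,G)$ of $A$ such that: the edges in $\mathcal R$ are pairwise non-adjacent (share no end-vertex); every edge with one end-vertex in $G$ has its other end-vertex in $B$; and each vertex in $B$ is joined to vertices of $G$ by at least two edges. Then the triples defined in (i) and in (ii) are tricolorings of $A$, there is exactly one tricoloring of $A$ satisfying (iii), and these three tricolorings are one and the same.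
   Context: Graphs are simple (no loops, no multiple edges). A vertex cover of $A=(V,\mathcal E)$ is a subset of $V$ containing at least one end-vertex of every edge; a minimal vertex cover is one of smallest cardinality. The positive (resp. negative) vertex-backbone is the set of vertices belonging to every (resp. no) minimal vertex cover; the other vertices are called degenerate. An edge joining two degenerate vertices is called exclusive if no minimal vertex cover contains both of its end-vertices. A matching is a set of pairwise non-adjacent edges; a maximal matching is one of largest cardinality. The positive edge-backbone is the set of edges belonging to every maximal matching. A vertex is optional if there is a maximal matching none of whose edges has it as an end-vertex. A vertex is unavoidable if it is neither optional nor an end-vertex of an edge in the positive edge-backbone. A tricoloring of $A$ is a triple $(B,\mathcal R,G)$ with $B,G\subseteq V$ and $\mathcal R\subseteq\mathcal E$ such that $B$, $G$ and the set of end-vertices of edges in $\mathcal R$ form a partition of $V$ (parts allowed to be empty). *)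

theory Defs
  imports Main
begin

definition simple_graph :: "'a set \<Rightarrow> 'a set set \<Rightarrow> bool" where
  "simple_graph V E \<longleftrightarrow>
     (\<forall>e\<in>E. \<exists>x y. x \<in> V \<and> y \<in> V \<and> x \<noteq> y \<and> e = {x, y})"

definition adj_rel :: "'a set set \<Rightarrow> ('a \<times> 'a) set" where
  "adj_rel E = {(x, y). {x, y} \<in> E}"

definition connected_graph :: "'a set \<Rightarrow> 'a set set \<Rightarrow> bool" where
  "connected_graph V E \<longleftrightarrow> (\<forall>u\<in>V. \<forall>v\<in>V. (u, v) \<in> (adj_rel E)\<^sup>*)"

definition is_cycle :: "'a set set \<Rightarrow> 'a list \<Rightarrow> bool" where
  "is_cycle E cs \<longleftrightarrow> length cs \<ge> 3 \<and> distinct cs \<and>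
     (\<forall>i. Suc i < length cs \<longrightarrow> {cs ! i, cs ! Suc i} \<in> E) \<and>
     {last cs, hd cs} \<in> E"

definition acyclic_graph :: "'a set set \<Rightarrow> bool" where
  "acyclic_graph E \<longleftrightarrow> \<not> (\<exists>cs. is_cycle E cs)"

definition finite_tree :: "'a set \<Rightarrow> 'a set set \<Rightarrow> bool" where
  "finite_tree V E \<longleftrightarrow> finite V \<and> V \<noteq> {} \<and> simple_graph V E \<and>
     connected_graph V E \<and> acyclic_graph E"

definition vertex_cover :: "'a set \<Rightarrow> 'a set set \<Rightarrow> 'a set \<Rightarrow> bool" where
  "vertex_cover V E C \<longleftrightarrow> C \<subseteq> V \<and> (\<forall>e\<in>E. e \<inter> C \<noteq> {})"

definition min_vertex_cover :: "'a set \<Rightarrow> 'a set set \<Rightarrow> 'a set \<Rightarrow> bool" where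
  "min_vertex_cover V E C \<longleftrightarrow> vertex_cover V E C \<and>
     (\<forall>C'. vertex_cover V E C' \<longrightarrow> card C \<le> card C')"

definition pos_vertex_backbone :: "'a set \<Rightarrow> 'a set set \<Rightarrow> 'a set" where
  "pos_vertex_backbone V E = {v \<in> V. \<forall>C. min_vertex_cover V E C \<longrightarrow> v \<in> C}"

definition neg_vertex_backbone :: "'a set \<Rightarrow> 'a set set \<Rightarrow> 'a set" where
  "neg_vertex_backbone V E = {v \<in> V. \<forall>C. min_vertex_cover V E C \<longrightarrow> v \<notin> C}"

definition degenerate :: "'a set \<Rightarrow> 'a set set \<Rightarrow> 'a \<Rightarrow> bool" where
  "degenerate V E v \<longleftrightarrow> v \<in> V \<and> v \<notin> pos_vertex_backbone V E \<and>
     v \<notin> neg_vertex_backbone V E"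

definition exclusive_edges :: "'a set \<Rightarrow> 'a set set \<Rightarrow> 'a set set" where
  "exclusive_edges V E = {e \<in> E. (\<forall>v\<in>e. degenerate V E v) \<and>
     \<not> (\<exists>C. min_vertex_cover V E C \<and> e \<subseteq> C)}"

definition matching :: "'a set set \<Rightarrow> 'a set set \<Rightarrow> bool" where
  "matching E M \<longleftrightarrow> M \<subseteq> E \<and> (\<forall>e1\<in>M. \<forall>e2\<in>M. e1 \<noteq> e2 \<longrightarrow> e1 \<inter> e2 = {})"

definition max_matching :: "'a set set \<Rightarrow> 'a set set \<Rightarrow> bool" where
  "max_matching E M \<longleftrightarrow> matching E M \<and>
     (\<forall>M'. matching E M' \<longrightarrow> card M' \<le> card M)"

definition pos_edge_backbone :: "'a set set \<Rightarrow> 'a set set" where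
  "pos_edge_backbone E = {e \<in> E. \<forall>M. max_matching E M \<longrightarrow> e \<in> M}"

definition optional_vertices :: "'a set \<Rightarrow> 'a set set \<Rightarrow> 'a set" where
  "optional_vertices V E = {v \<in> V. \<exists>M. max_matching E M \<and> (\<forall>e\<in>M. v \<notin> e)}"

definition unavoidable_vertices :: "'a set \<Rightarrow> 'a set set \<Rightarrow> 'a set" where
  "unavoidable_vertices V E = {v \<in> V. v \<notin> optional_vertices V E \<and>
     \<not> (\<exists>e\<in>pos_edge_backbone E. v \<in> e)}"

definition tricoloring :: "'a set \<Rightarrow> 'a set set \<Rightarrow> 'a set \<times> 'a set set \<times> 'a set \<Rightarrow> bool" where
  "tricoloring V E T \<longleftrightarrow> (case T of (B, R, G) \<Rightarrow>
     B \<subseteq> V \<and> R \<subseteq> E \<and> G \<subseteq> V \<and>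
     B \<union> \<Union>R \<union> G = V \<and>
     B \<inter> \<Union>R = {} \<and> B \<inter> G = {} \<and> \<Union>R \<inter> G = {})"

definition cond_iii :: "'a set \<Rightarrow> 'a set set \<Rightarrow> 'a set \<times> 'a set set \<times> 'a set \<Rightarrow> bool" where
  "cond_iii V E T \<longleftrightarrow> tricoloring V E T \<and> (case T of (B, R, G) \<Rightarrow>
     (\<forall>e1\<in>R. \<forall>e2\<in>R. e1 \<noteq> e2 \<longrightarrow> e1 \<inter> e2 = {}) \<and>
     (\<forall>e\<in>E. \<forall>g\<in>G. g \<in> e \<longrightarrow> e - {g} \<subseteq> B) \<and>
     (\<forall>b\<in>B. card {e \<in> E. b \<in> e \<and> e \<inter> G \<noteq> {}} \<ge> 2))"

definition triple_i :: "'a set \<Rightarrow> 'a set set \<Rightarrow> 'a set \<times> 'a set set \<times> 'a set" where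
  "triple_i V E = (pos_vertex_backbone V E, exclusive_edges V E, neg_vertex_backbone V E)"

definition triple_ii :: "'a set \<Rightarrow> 'a set set \<Rightarrow> 'a set \<times> 'a set set \<times> 'a set" where
  "triple_ii V E = (unavoidable_vertices V E, pos_edge_backbone E, optional_vertices V E)"

end

theory Submission
  imports Defs
begin


lemma adj_rel_iff: "(x, y) \<in> adj_rel F \<longleftrightarrow> {x, y} \<in> F"
  by (simp add: adj_rel_def)

lemma adj_rel_conv: "(adj_rel F)\<inverse> = adj_rel F"
  by (auto simp: adj_rel_def insert_commute)

lemma rt_sym: "(x, y) \<in> (adj_rel F)\<^sup>* \<Longrightarrow> (y, x) \<in> (adj_rel F)\<^sup>*"
  proof -
  assume "(x, y) \<in> (adj_rel F)\<^sup>*"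
  then have "(y, x) \<in> ((adj_rel F)\<^sup>*)\<inverse>" by simp
  then show ?thesis by (simp add: rtrancl_converse[symmetric] adj_rel_conv)
qed

lemma adj_rel_mono: "F \<subseteq> F' \<Longrightarrow> adj_rel F \<subseteq> adj_rel F'"
  by (auto simp: adj_rel_def)

lemma rt_mono: "F \<subseteq> F' \<Longrightarrow> (x, y) \<in> (adj_rel F)\<^sup>* \<Longrightarrow> (x, y) \<in> (adj_rel F')\<^sup>*"
  by (meson adj_rel_mono rtrancl_mono subsetD)

lemma rt_step: "{x, y} \<in> F \<Longrightarrow> (y, z) \<in> (adj_rel F)\<^sup>* \<Longrightarrow> (x, z) \<in> (adj_rel F)\<^sup>*"
  by (meson adj_rel_iff converse_rtrancl_into_rtrancl)

lemma avoid_rt: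
  assumes "(a, b) \<in> (adj_rel F)\<^sup>*"
  shows "(a, b) \<in> (adj_rel (F - {e}))\<^sup>* \<or> (\<exists>z\<in>e. (z, b) \<in> (adj_rel (F - {e}))\<^sup>*)"
  using assms
proof (induction rule: converse_rtrancl_induct)
  case base
  then show ?case by simp
next
  case (step y z)
  show ?case
  proof (cases "{y, z} = e")
    case True
    then have "z \<in> e" by blast
    show ?thesis
    proof (cases "(z, b) \<in> (adj_rel (F - {e}))\<^sup>*")
      case True
      then show ?thesis using \<open>z \<in> e\<close> by (intro disjI2 bexI)
    next
      case False
      then show ?thesis using step.IH by (intro disjI2) simp
    qed
  next
    case False
    then have yz: "{y, z} \<in> F - {e}" using step(1) by (auto simp: adj_rel_iff)
    from step.IH show ?thesis
    proof
      assume "(z, b) \<in> (adj_rel (F - {e}))\<^sup>*"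
      then show ?thesis using rt_step[OF yz] by (intro disjI1)
    next
      assume "\<exists>z\<in>e. (z, b) \<in> (adj_rel (F - {e}))\<^sup>*"
      then show ?thesis by (intro disjI2)
    qed
  qed
qed

lemma avoid_relpow:
  assumes "(a, b) \<in> (adj_rel F) ^^ m"
  shows "(a, b) \<in> (adj_rel (F - {e}))\<^sup>* \<or> (\<forall>z\<in>e. \<exists>j\<le>m. (z, b) \<in> (adj_rel F) ^^ j)"
  using assms
proof (induction m arbitrary: a)
  case 0
  then show ?case by simp
next
  case (Suc m)
  from Suc.prems obtain y where y: "(a, y) \<in> adj_rel F" "(y, b) \<in> (adj_rel F) ^^ m"
    using relpow_Suc_E2 by metis
  have ab: "(a, b) \<in> (adj_rel F) ^^ Suc m" using Suc.prems .
  show ?case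
  proof (cases "{a, y} = e")
    case True
    have "\<forall>z\<in>e. \<exists>j\<le>Suc m. (z, b) \<in> (adj_rel F) ^^ j"
    proof
      fix z assume "z \<in> e"
      then have "z = a \<or> z = y" using True by blast
      then show "\<exists>j\<le>Suc m. (z, b) \<in> (adj_rel F) ^^ j"
      proof
        assume "z = a" then show ?thesis using ab by (intro exI[of _ "Suc m"]) simp
      next
        assume "z = y" then show ?thesis using y(2) by (intro exI[of _ m]) simp
      qed
    qed
    then show ?thesis by (intro disjI2)
  next
    case False
    then have ay: "{a, y} \<in> F - {e}" using y by (auto simp: adj_rel_iff)
    from Suc.IH[OF y(2)] show ?thesis
    proof
      assume "(y, b) \<in> (adj_rel (F - {e}))\<^sup>*"
      then show ?thesis using rt_step[OF ay] by (intro disjI1)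
    next
      assume h: "\<forall>z\<in>e. \<exists>j\<le>m. (z, b) \<in> (adj_rel F) ^^ j"
      have "\<forall>z\<in>e. \<exists>j\<le>Suc m. (z, b) \<in> (adj_rel F) ^^ j"
      proof
        fix z assume "z \<in> e"
        then obtain j where "j \<le> m" "(z, b) \<in> (adj_rel F) ^^ j" using h by blast
        then show "\<exists>j\<le>Suc m. (z, b) \<in> (adj_rel F) ^^ j" using le_SucI by blast
      qed
      then show ?thesis by (intro disjI2)
    qed
  qed
qed

lemma simple_path:
  assumes "(a, b) \<in> (adj_rel F)\<^sup>*"
  shows "\<exists>xs. xs \<noteq> [] \<and> hd xs = a \<and> last xs = b \<and> distinct xs \<and>
     successively (\<lambda>u v. {u, v} \<in> F) xs"
  using assms
proof (induction rule: converse_rtrancl_induct)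
  case base
  then show ?case by (intro exI[of _ "[b]"]) auto
next
  case (step y z)
  then obtain xs where xs: "xs \<noteq> []" "hd xs = z" "last xs = b" "distinct xs"
     "successively (\<lambda>u v. {u, v} \<in> F) xs" by blast
  show ?case
  proof (cases "y \<in> set xs")
    case True
    then obtain us vs where uv: "xs = us @ y # vs" by (meson split_list)
    have "successively (\<lambda>u v. {u, v} \<in> F) (y # vs)"
      using xs(5) uv by (simp add: successively_append_iff)
    moreover have "last (y # vs) = b" using xs(3) uv by simp
    moreover have "distinct (y # vs)" using xs(4) uv by simp
    ultimately show ?thesis by (intro exI[of _ "y # vs"]) auto
  next
    case False
    have "{y, z} \<in> F" using step(1) by (simp add: adj_rel_iff)
    then have "successively (\<lambda>u v. {u, v} \<in> F) (y # xs)"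
      using xs by (cases xs) auto
    then show ?thesis using xs False by (intro exI[of _ "y # xs"]) auto
  qed
qed



definition par :: "'a set set \<Rightarrow> 'a \<Rightarrow> 'a \<Rightarrow> 'a \<Rightarrow> bool" where
  "par E r v w \<longleftrightarrow> {v, w} \<in> E \<and> (v, r) \<in> (adj_rel (E - {{v, w}}))\<^sup>*"

definition dist :: "'a set set \<Rightarrow> 'a \<Rightarrow> 'a \<Rightarrow> nat" where
  "dist E r v = (LEAST n. (v, r) \<in> (adj_rel E) ^^ n)"

lemma two_elems_neq: "{x, y} = {a, b} \<Longrightarrow> a \<noteq> b \<Longrightarrow> x \<noteq> y"
  by auto

locale forest =
  fixes V :: "'a set" and E :: "'a set set"
  assumes fin: "finite V" and sg: "simple_graph V E" and acy: "acyclic_graph E"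
begin

lemma edgeD: "e \<in> E \<Longrightarrow> \<exists>x y. x \<in> V \<and> y \<in> V \<and> x \<noteq> y \<and> e = {x, y}"
  using sg by (auto simp: simple_graph_def)

lemma E_sub: "E \<subseteq> Pow V"
proof
  fix e assume "e \<in> E"
  then obtain x y where "x \<in> V" "y \<in> V" "e = {x, y}" using edgeD by blast
  then show "e \<in> Pow V" by simp
qed

lemma finE: "finite E"
  using E_sub fin by (simp add: finite_subset)

lemma edge_neq: "{x, y} \<in> E \<Longrightarrow> x \<noteq> y"
  proof -
  assume "{x, y} \<in> E"
  then obtain a b where "{x, y} = {a, b}" "a \<noteq> b" using edgeD by blast
  then show ?thesis by (rule two_elems_neq)
qed

lemma edge_V: "{x, y} \<in> E \<Longrightarrow> x \<in> V \<and> y \<in> V"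
  using E_sub by blast

lemma SEP:
  assumes e: "{x, y} \<in> E"
  shows "(x, y) \<notin> (adj_rel (E - {{x, y}}))\<^sup>*"
proof
  assume "(x, y) \<in> (adj_rel (E - {{x, y}}))\<^sup>*"
  then obtain xs where xs: "xs \<noteq> []" "hd xs = x" "last xs = y" "distinct xs"
     "successively (\<lambda>u v. {u, v} \<in> E - {{x, y}}) xs"
    using simple_path[of x y "E - {{x, y}}"] by blast
  have xy: "x \<noteq> y" using edge_neq[OF e] .
  have l3: "length xs \<ge> 3"
  proof (cases xs)
    case Nil then show ?thesis using xs(1) by simp
  next
    case (Cons a t)
    show ?thesis
    proof (cases t)
      case Nil then show ?thesis using xs xy \<open>xs = a # t\<close> by simp
    next
      case (Cons b u)
      show ?thesis
      proof (cases u)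
        case Nil then show ?thesis using xs \<open>xs = a # t\<close> Cons by simp
      next
        case (Cons c w) then show ?thesis using \<open>xs = a # t\<close> \<open>t = b # u\<close> by simp
      qed
    qed
  qed
  have "is_cycle E xs"
    unfolding is_cycle_def
  proof (intro conjI allI impI)
    show "3 \<le> length xs" by (rule l3)
    show "distinct xs" by (rule xs(4))
    fix i assume "Suc i < length xs"
    then show "{xs ! i, xs ! Suc i} \<in> E" using successively_nth[OF xs(5)] by simp
  next
    have "{last xs, hd xs} = {x, y}" using xs(2,3) by auto
    then show "{last xs, hd xs} \<in> E" using e by simp
  qed
  then show False using acy unfolding acyclic_graph_def by blast
qed

lemma root_nopar: "\<not> par E r v r"
  unfolding par_def using SEP[of v r] by blast

lemma par_not_both: "par E r v w \<Longrightarrow> par E r w v \<Longrightarrow> False"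
proof -
  assume a: "par E r v w" "par E r w v"
  have c: "{w, v} = {v, w}" by blast
  from a have e: "{v, w} \<in> E" and h1: "(v, r) \<in> (adj_rel (E - {{v, w}}))\<^sup>*"
    and h2: "(w, r) \<in> (adj_rel (E - {{v, w}}))\<^sup>*"
    unfolding par_def c by auto
  have "(v, w) \<in> (adj_rel (E - {{v, w}}))\<^sup>*"
    using h1 rt_sym[OF h2] by (rule rtrancl_trans)
  then show False using SEP[OF e] by blast
qed

lemma par_unique:
  assumes p1: "par E r v1 w" and p2: "par E r v2 w"
  shows "v1 = v2"
proof (rule ccontr)
  assume ne: "v1 \<noteq> v2"
  define e1 where "e1 = {v1, w}"
  define e2 where "e2 = {v2, w}"
  have e1: "e1 \<in> E" and h1: "(v1, r) \<in> (adj_rel (E - {e1}))\<^sup>*"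
    using p1 by (auto simp: par_def e1_def)
  have e2: "e2 \<in> E" and h2: "(v2, r) \<in> (adj_rel (E - {e2}))\<^sup>*"
    using p2 by (auto simp: par_def e2_def)
  have "v1 \<noteq> w" using edge_neq e1 unfolding e1_def by blast
  then have ne12: "e1 \<noteq> e2" using ne unfolding e1_def e2_def by (auto simp: doubleton_eq_iff)
  have sep1: "(w, v1) \<notin> (adj_rel (E - {e1}))\<^sup>*"
    using SEP[OF e1[unfolded e1_def]] rt_sym[of w v1 "E - {e1}"] unfolding e1_def by (auto simp: insert_commute)
  have sep2: "(w, v2) \<notin> (adj_rel (E - {e2}))\<^sup>*"
    using SEP[OF e2[unfolded e2_def]] rt_sym[of w v2 "E - {e2}"] unfolding e2_def by (auto simp: insert_commute)
  have sub: "E - {e1} - {e2} \<subseteq> E - {e1}" "E - {e1} - {e2} \<subseteq> E - {e2}" by auto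
  have e2in: "{w, v2} \<in> E - {e1}" using e2 ne12 by (auto simp: e2_def insert_commute)
  have e1in: "{w, v1} \<in> E - {e2}" using e1 ne12 by (auto simp: e1_def insert_commute)
  from avoid_rt[OF h1, of e2]
  show False
  proof
    assume "(v1, r) \<in> (adj_rel (E - {e1} - {e2}))\<^sup>*"
    then have "(v1, r) \<in> (adj_rel (E - {e2}))\<^sup>*" using rt_mono[OF sub(2)] by blast
    then have "(w, r) \<in> (adj_rel (E - {e2}))\<^sup>*" using rt_step[OF e1in] by blast
    then have "(w, v2) \<in> (adj_rel (E - {e2}))\<^sup>*" using rt_sym[OF h2] by (rule rtrancl_trans)
    then show False using sep2 by blast
  next
    assume "\<exists>z\<in>e2. (z, r) \<in> (adj_rel (E - {e1} - {e2}))\<^sup>*"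
    then obtain z where z: "z = v2 \<or> z = w" "(z, r) \<in> (adj_rel (E - {e1}))\<^sup>*"
      using rt_mono[OF sub(1)] unfolding e2_def by blast
    have "(w, r) \<in> (adj_rel (E - {e1}))\<^sup>*"
      using z rt_step[OF e2in] by blast
    then have "(w, v1) \<in> (adj_rel (E - {e1}))\<^sup>*" using rt_sym[OF h1] by (rule rtrancl_trans)
    then show False using sep1 by blast
  qed
qed

lemma par_edge:
  assumes e: "{v, w} \<in> E" and vr: "(v, r) \<in> (adj_rel E)\<^sup>*"
  shows "par E r v w \<or> par E r w v"
proof -
  have c: "{w, v} = {v, w}" by blast
  from avoid_rt[OF vr, of "{v, w}"] show ?thesis
  proof
    assume "(v, r) \<in> (adj_rel (E - {{v, w}}))\<^sup>*"
    then show ?thesis using e unfolding par_def by blast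
  next
    assume "\<exists>z\<in>{v, w}. (z, r) \<in> (adj_rel (E - {{v, w}}))\<^sup>*"
    then have "(v, r) \<in> (adj_rel (E - {{v, w}}))\<^sup>* \<or> (w, r) \<in> (adj_rel (E - {{w, v}}))\<^sup>*"
      unfolding c by blast
    then show ?thesis using e c unfolding par_def by auto
  qed
qed

lemma dist_ex: "(v, r) \<in> (adj_rel E)\<^sup>* \<Longrightarrow> (v, r) \<in> (adj_rel E) ^^ dist E r v"
  unfolding dist_def by (meson LeastI_ex rtrancl_imp_relpow)

lemma dist_le: "(v, r) \<in> (adj_rel E) ^^ n \<Longrightarrow> dist E r v \<le> n"
  unfolding dist_def by (rule Least_le)

lemma dist_step:
  assumes "{c, p} \<in> E" "(p, r) \<in> (adj_rel E)\<^sup>*"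
  shows "dist E r c \<le> Suc (dist E r p)"
proof -
  have "(c, r) \<in> (adj_rel E) ^^ Suc (dist E r p)"
    using relpow_Suc_I2[of c p "adj_rel E"] dist_ex[OF assms(2)] assms(1) by (simp add: adj_rel_iff)
  then show ?thesis by (rule dist_le)
qed

lemma dist_root: "dist E r r = 0"
  using dist_le[of r r 0] by simp

lemma par_exists:
  assumes vr: "(v, r) \<in> (adj_rel E)\<^sup>*" and ne: "v \<noteq> r"
  shows "\<exists>x. par E r x v \<and> dist E r x < dist E r v"
proof -
  define n where "n = dist E r v"
  have w: "(v, r) \<in> (adj_rel E) ^^ n" using dist_ex[OF vr] n_def by simp
  have "n \<noteq> 0"
  proof
    assume "n = 0"
    then have "(v, r) \<in> Id" using w by simp
    then show False using ne by simp
  qed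
  then obtain m where m: "n = Suc m" by (cases n) auto
  obtain x where x: "(v, x) \<in> adj_rel E" "(x, r) \<in> (adj_rel E) ^^ m"
    using w m relpow_Suc_E2 by metis
  have dx: "dist E r x \<le> m" using dist_le[OF x(2)] .
  from avoid_relpow[OF x(2), of "{v, x}"]
  have "(x, r) \<in> (adj_rel (E - {{v, x}}))\<^sup>*"
  proof
    assume "\<forall>z\<in>{v, x}. \<exists>j\<le>m. (z, r) \<in> adj_rel E ^^ j"
    then obtain j where "j \<le> m" "(v, r) \<in> adj_rel E ^^ j" by blast
    then have "n \<le> m" using dist_le[of v r j] n_def by simp
    then show ?thesis using m by simp
  qed
  moreover have "{x, v} = {v, x}" by blast
  ultimately have "par E r x v" using x(1) unfolding par_def adj_rel_iff by simp
  then show ?thesis using dx m n_def by auto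
qed

lemma par_less:
  assumes p: "par E r x v" and vr: "(v, r) \<in> (adj_rel E)\<^sup>*"
  shows "dist E r x < dist E r v"
proof -
  have "v \<noteq> r" using p root_nopar by blast
  then obtain x' where "par E r x' v" "dist E r x' < dist E r v" using par_exists[OF vr] by blast
  then show ?thesis using par_unique[OF p] by blast
qed

end



context forest
begin

lemma edge_other: "e \<in> E \<Longrightarrow> x \<in> e \<Longrightarrow> \<exists>y. y \<noteq> x \<and> e = {x, y}"
proof -
  assume "e \<in> E" "x \<in> e"
  then obtain a b where "a \<noteq> b" "e = {a, b}" using edgeD by blast
  then show ?thesis using \<open>x \<in> e\<close> by auto
qed

lemma edge_form: "e \<in> E \<Longrightarrow> x \<in> e \<Longrightarrow> y \<in> e \<Longrightarrow> x \<noteq> y \<Longrightarrow> e = {x, y}"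
proof -
  assume "e \<in> E" "x \<in> e" "y \<in> e" "x \<noteq> y"
  then obtain a b where "e = {a, b}" using edgeD by blast
  then show ?thesis using \<open>x \<in> e\<close> \<open>y \<in> e\<close> \<open>x \<noteq> y\<close> by auto
qed

lemma dual:
  assumes M: "matching E M" and C: "vertex_cover V E C"
  shows "card M \<le> card C"
proof -
  define f where "f e = (SOME c. c \<in> e \<inter> C)" for e
  have fe: "f e \<in> e \<inter> C" if "e \<in> M" for e
  proof -
    have "e \<in> E" using M that by (auto simp: matching_def)
    then have "e \<inter> C \<noteq> {}" using C by (auto simp: vertex_cover_def)
    then have "\<exists>c. c \<in> e \<inter> C" by blast
    then show ?thesis unfolding f_def by (rule someI_ex)
  qed
  have inj: "inj_on f M"
  proof (rule inj_onI)
    fix e1 e2 assume "e1 \<in> M" "e2 \<in> M" "f e1 = f e2"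
    then have i: "f e1 \<in> e1 \<inter> e2" using fe[of e1] fe[of e2] by simp
    show "e1 = e2"
    proof (rule ccontr)
      assume "e1 \<noteq> e2"
      then have "e1 \<inter> e2 = {}" using M \<open>e1 \<in> M\<close> \<open>e2 \<in> M\<close> unfolding matching_def by blast
      then show False using i by simp
    qed
  qed
  have "f ` M \<subseteq> C" using fe by blast
  moreover have "finite C" using C fin finite_subset unfolding vertex_cover_def by blast
  ultimately have "card (f ` M) \<le> card C" by (rule card_mono[rotated])
  then show ?thesis using card_image[OF inj] by simp
qed

lemma tight:
  assumes M: "matching E M" and C: "vertex_cover V E C" and le: "card C \<le> card M"
  shows "(\<forall>c\<in>C. \<exists>e\<in>M. c \<in> e) \<and> (\<forall>e\<in>M. \<forall>c1\<in>e \<inter> C. \<forall>c2\<in>e \<inter> C. c1 = c2)"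
proof -
  define f where "f e = (SOME c. c \<in> e \<inter> C)" for e
  have fe: "f e \<in> e \<inter> C" if "e \<in> M" for e
  proof -
    have "e \<in> E" using M that by (auto simp: matching_def)
    then have "e \<inter> C \<noteq> {}" using C by (auto simp: vertex_cover_def)
    then have "\<exists>c. c \<in> e \<inter> C" by blast
    then show ?thesis unfolding f_def by (rule someI_ex)
  qed
  have inj: "inj_on f M"
  proof (rule inj_onI)
    fix e1 e2 assume "e1 \<in> M" "e2 \<in> M" "f e1 = f e2"
    then have i: "f e1 \<in> e1 \<inter> e2" using fe[of e1] fe[of e2] by simp
    show "e1 = e2"
    proof (rule ccontr)
      assume "e1 \<noteq> e2"
      then have "e1 \<inter> e2 = {}" using M \<open>e1 \<in> M\<close> \<open>e2 \<in> M\<close> unfolding matching_def by blast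
      then show False using i by simp
    qed
  qed
  have sub: "f ` M \<subseteq> C" using fe by blast
  have finC: "finite C" using C fin finite_subset unfolding vertex_cover_def by blast
  have "card C \<le> card (f ` M)" using card_image[OF inj] le by simp
  then have eq: "f ` M = C" using card_seteq[OF finC sub] by blast
  show ?thesis
  proof (intro conjI ballI)
    fix c assume "c \<in> C"
    then obtain e where "e \<in> M" "c = f e" using eq by blast
    then show "\<exists>e\<in>M. c \<in> e" using fe by blast
  next
    fix e c1 c2 assume e: "e \<in> M" and c1: "c1 \<in> e \<inter> C" and c2: "c2 \<in> e \<inter> C"
    show "c1 = c2"
    proof (rule ccontr)
      assume ne: "c1 \<noteq> c2"
      obtain c where c: "c \<in> e \<inter> C" "c \<noteq> f e" using c1 c2 ne by blast
      then obtain e' where e': "e' \<in> M" "c = f e'" using eq by blast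
      then have "e' \<noteq> e" using c by blast
      moreover have "c \<in> e \<inter> e'" using c e' fe by blast
      ultimately show False using M e e' unfolding matching_def by blast
    qed
  qed
qed

end

locale tri = forest +
  fixes B :: "'a set" and R :: "'a set set" and G :: "'a set"
  assumes conn: "connected_graph V E" and Vne: "V \<noteq> {}"
    and ciii: "cond_iii V E (B, R, G)"
begin

lemma BV: "B \<subseteq> V" and RE: "R \<subseteq> E" and GV: "G \<subseteq> V"
  and cov: "B \<union> \<Union>R \<union> G = V" and d1: "B \<inter> \<Union>R = {}" and d2: "B \<inter> G = {}"
  and d3: "\<Union>R \<inter> G = {}"
  using ciii unfolding cond_iii_def tricoloring_def by auto

lemma Rdisj: "e1 \<in> R \<Longrightarrow> e2 \<in> R \<Longrightarrow> e1 \<noteq> e2 \<Longrightarrow> e1 \<inter> e2 = {}"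
  using ciii unfolding cond_iii_def by auto

lemma Gnb: "e \<in> E \<Longrightarrow> g \<in> G \<Longrightarrow> g \<in> e \<Longrightarrow> e - {g} \<subseteq> B"
  using ciii unfolding cond_iii_def by auto

lemma Bdeg: "b \<in> B \<Longrightarrow> 2 \<le> card {e \<in> E. b \<in> e \<and> e \<inter> G \<noteq> {}}"
  using ciii unfolding cond_iii_def by auto

lemma reach: "v \<in> V \<Longrightarrow> r \<in> V \<Longrightarrow> (v, r) \<in> (adj_rel E)\<^sup>*"
  using conn unfolding connected_graph_def by blast

lemma finB: "finite B" using BV fin finite_subset by blast
lemma finR: "finite R" using RE finE finite_subset by blast

lemma two_gnb:
  assumes b: "b \<in> B"
  shows "\<exists>g1 g2. g1 \<noteq> g2 \<and> g1 \<in> G \<and> g2 \<in> G \<and> {b, g1} \<in> E \<and> {b, g2} \<in> E"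
proof -
  define S where "S = {e \<in> E. b \<in> e \<and> e \<inter> G \<noteq> {}}"
  have finS: "finite S" using finE S_def by simp
  have cS: "2 \<le> card S" using Bdeg[OF b] S_def by simp
  then have "S \<noteq> {}" by auto
  then obtain e1 where e1: "e1 \<in> S" by blast
  have "card (S - {e1}) \<ge> 1" using cS e1 finS by simp
  then have "S - {e1} \<noteq> {}" by (metis card.empty not_one_le_zero)
  then obtain e2 where e2: "e2 \<in> S" "e2 \<noteq> e1" by blast
  have form: "\<exists>g. g \<in> G \<and> e = {b, g}" if "e \<in> S" for e
  proof -
    from that obtain g where g: "g \<in> e" "g \<in> G" "e \<in> E" "b \<in> e" unfolding S_def by blast
    have "b \<noteq> g" using b g d2 by blast
    then show ?thesis using edge_form[OF g(3) g(4) g(1)] g by blast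
  qed
  obtain g1 where g1: "g1 \<in> G" "e1 = {b, g1}" using form e1 by blast
  obtain g2 where g2: "g2 \<in> G" "e2 = {b, g2}" using form e2 by blast
  have "g1 \<noteq> g2" using g1 g2 e2 by blast
  moreover have "e1 \<in> E" "e2 \<in> E" using e1 e2 S_def by auto
  ultimately show ?thesis using g1 g2 by blast
qed

lemma gchild:
  assumes r: "r \<in> V" and b: "b \<in> B"
  shows "\<exists>g. g \<in> G \<and> par E r b g"
proof -
  obtain g1 g2 where g: "g1 \<noteq> g2" "g1 \<in> G" "g2 \<in> G" "{b, g1} \<in> E" "{b, g2} \<in> E"
    using two_gnb[OF b] by blast
  have br: "(b, r) \<in> (adj_rel E)\<^sup>*" using reach[OF _ r] b BV by blast
  have p1: "par E r b g1 \<or> par E r g1 b" using par_edge[OF g(4) br] .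
  have p2: "par E r b g2 \<or> par E r g2 b" using par_edge[OF g(5) br] .
  have "\<not> (par E r g1 b \<and> par E r g2 b)" using par_unique g(1) by blast
  then show ?thesis using p1 p2 g by blast
qed

definition gc :: "'a \<Rightarrow> 'a \<Rightarrow> 'a" where
  "gc r b = (SOME g. g \<in> G \<and> par E r b g)"

lemma gc_props: "r \<in> V \<Longrightarrow> b \<in> B \<Longrightarrow> gc r b \<in> G \<and> par E r b (gc r b)"
  unfolding gc_def using gchild by (metis (no_types, lifting) someI_ex)

definition Mr :: "'a \<Rightarrow> 'a set set" where
  "Mr r = R \<union> (\<lambda>b. {b, gc r b}) ` B"

lemma Mr_matching:
  assumes r: "r \<in> V"
  shows "matching E (Mr r)"
  unfolding matching_def
proof (intro conjI ballI impI)
  show "Mr r \<subseteq> E"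
    using RE gc_props[OF r] unfolding Mr_def par_def by auto
next
  fix e1 e2 assume e1: "e1 \<in> Mr r" and e2: "e2 \<in> Mr r" and ne: "e1 \<noteq> e2"
  have nb: "e \<inter> {b, gc r b} = {}" if "e \<in> R" "b \<in> B" for e b
  proof -
    have "b \<notin> e" using that d1 by blast
    moreover have "gc r b \<notin> e" using that d3 gc_props[OF r that(2)] by blast
    ultimately show ?thesis by blast
  qed
  show "e1 \<inter> e2 = {}"
  proof (cases "e1 \<in> R")
    case True
    show ?thesis
    proof (cases "e2 \<in> R")
      case True
      then show ?thesis using Rdisj \<open>e1 \<in> R\<close> ne by blast
    next
      case False
      then obtain b where "b \<in> B" "e2 = {b, gc r b}" using e2 unfolding Mr_def by blast
      then show ?thesis using nb[OF \<open>e1 \<in> R\<close>] by blast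
    qed
  next
    case False
    then obtain b1 where b1: "b1 \<in> B" "e1 = {b1, gc r b1}" using e1 unfolding Mr_def by blast
    show ?thesis
    proof (cases "e2 \<in> R")
      case True
      then show ?thesis using nb[OF True b1(1)] b1 by blast
    next
      case False
      then obtain b2 where b2: "b2 \<in> B" "e2 = {b2, gc r b2}" using e2 unfolding Mr_def by blast
      have "b1 \<noteq> b2" using b1 b2 ne by blast
      moreover have "gc r b1 \<noteq> gc r b2"
        using par_unique gc_props[OF r b1(1)] gc_props[OF r b2(1)] \<open>b1 \<noteq> b2\<close> by metis
      moreover have "b1 \<noteq> gc r b2" "b2 \<noteq> gc r b1"
        using gc_props[OF r b1(1)] gc_props[OF r b2(1)] b1 b2 d2 by blast+
      ultimately show ?thesis using b1 b2 by blast
    qed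
  qed
qed

lemma Mr_card:
  assumes r: "r \<in> V"
  shows "card (Mr r) = card B + card R"
proof -
  have inj: "inj_on (\<lambda>b. {b, gc r b}) B"
  proof (rule inj_onI)
    fix b1 b2 assume b: "b1 \<in> B" "b2 \<in> B" "{b1, gc r b1} = {b2, gc r b2}"
    show "b1 = b2"
    proof (rule ccontr)
      assume "b1 \<noteq> b2"
      then have "b1 = gc r b2" using b(3) by (auto simp: doubleton_eq_iff)
      then show False using gc_props[OF r b(2)] b(1) d2 by blast
    qed
  qed
  have disj: "R \<inter> (\<lambda>b. {b, gc r b}) ` B = {}" using d1 by blast
  have "card (Mr r) = card R + card ((\<lambda>b. {b, gc r b}) ` B)"
    unfolding Mr_def using card_Un_disjoint[OF finR _ disj] finB by simp
  then show ?thesis using card_image[OF inj] by simp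
qed

lemma Mr_root: "g \<in> G \<Longrightarrow> e \<in> Mr g \<Longrightarrow> g \<notin> e"
proof -
  assume g: "g \<in> G" and e: "e \<in> Mr g"
  have gV: "g \<in> V" using g GV by blast
  show "g \<notin> e"
  proof (cases "e \<in> R")
    case True then show ?thesis using g d3 by blast
  next
    case False
    then obtain b where b: "b \<in> B" "e = {b, gc g b}" using e unfolding Mr_def by blast
    have "g \<noteq> b" using b g d2 by blast
    moreover have "g \<noteq> gc g b" using gc_props[OF gV b(1)] root_nopar by metis
    ultimately show ?thesis using b by blast
  qed
qed

definition Cu :: "'a \<Rightarrow> 'a set" where
  "Cu u = B \<union> {x. \<exists>y. {x, y} \<in> R \<and> par E u x y}"

lemma child_in:
  assumes u: "u \<in> V" and e: "{x, y} \<in> E" "{x, y} \<notin> R" and y: "y \<in> \<Union>R" and p: "par E u x y"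
  shows "y \<in> Cu u"
proof -
  obtain e' where e': "e' \<in> R" "y \<in> e'" using y by blast
  then obtain y' where y': "y' \<noteq> y" "e' = {y, y'}" using edge_other RE by blast
  have "y' \<noteq> x" using e' y' e(2) by (auto simp: insert_commute)
  have yV: "y \<in> V" using edge_V e(1) by blast
  have "{y, y'} \<in> E" using e' y' RE by blast
  from par_edge[OF this reach[OF yV u]]
  show ?thesis
  proof
    assume "par E u y y'"
    then show ?thesis using e' y' unfolding Cu_def by blast
  next
    assume "par E u y' y"
    then have "y' = x" using par_unique p by blast
    then show ?thesis using \<open>y' \<noteq> x\<close> by blast
  qed
qed

lemma Cu_cover:
  assumes u: "u \<in> V"
  shows "vertex_cover V E (Cu u)"
  unfolding vertex_cover_def
proof (intro conjI ballI)
  show "Cu u \<subseteq> V"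
  proof
    fix x assume "x \<in> Cu u"
    then show "x \<in> V"
    proof (unfold Cu_def, elim UnE)
      assume "x \<in> B" then show ?thesis using BV by blast
    next
      assume "x \<in> {x. \<exists>y. {x, y} \<in> R \<and> par E u x y}"
      then obtain y where "{x, y} \<in> E" using RE by blast
      then show ?thesis using edge_V by blast
    qed
  qed
next
  fix e assume e: "e \<in> E"
  then obtain x y where xy: "x \<in> V" "y \<in> V" "x \<noteq> y" "e = {x, y}" using edgeD by blast
  have eE: "{x, y} \<in> E" using e xy by simp
  have eE': "{y, x} \<in> E" using eE by (simp add: insert_commute)
  show "e \<inter> Cu u \<noteq> {}"
  proof (cases "x \<in> B \<or> y \<in> B")
    case True then show ?thesis using xy unfolding Cu_def by blast
  next
    case nB: False
    show ?thesis
    proof (cases "x \<in> G \<or> y \<in> G")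
      case True
      then show ?thesis
      proof
        assume "x \<in> G" then have "y \<in> B" using Gnb[OF e] xy by blast
        then show ?thesis using nB by blast
      next
        assume "y \<in> G" then have "x \<in> B" using Gnb[OF e] xy by blast
        then show ?thesis using nB by blast
      qed
    next
      case False
      then have xR: "x \<in> \<Union>R" and yR: "y \<in> \<Union>R" using nB cov xy by blast+
      have xr: "(x, u) \<in> (adj_rel E)\<^sup>*" using reach[OF xy(1) u] .
      show ?thesis
      proof (cases "e \<in> R")
        case True
        have eR': "{y, x} \<in> R" using True xy by (simp add: insert_commute)
        from par_edge[OF eE xr] show ?thesis
        proof
          assume "par E u x y" then have "x \<in> Cu u" using True xy unfolding Cu_def by blast
          then show ?thesis using xy by blast
        next
          assume "par E u y x" then have "y \<in> Cu u" using eR' unfolding Cu_def by blast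
          then show ?thesis using xy by blast
        qed
      next
        case False
        have n1: "{x, y} \<notin> R" using False xy by simp
        have n2: "{y, x} \<notin> R" using n1 by (simp add: insert_commute)
        from par_edge[OF eE xr] show ?thesis
        proof
          assume "par E u x y" then have "y \<in> Cu u" using child_in[OF u eE n1 yR] by blast
          then show ?thesis using xy by blast
        next
          assume "par E u y x" then have "x \<in> Cu u" using child_in[OF u eE' n2 xR] by blast
          then show ?thesis using xy by blast
        qed
      qed
    qed
  qed
qed

lemma Cu_self:
  assumes uR: "u \<in> \<Union>R"
  shows "u \<in> Cu u"
proof -
  obtain e where e: "e \<in> R" "u \<in> e" using uR by blast
  then obtain u' where u': "u' \<noteq> u" "e = {u, u'}" using edge_other RE by blast
  have eE: "{u, u'} \<in> E" using e u' RE by blast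
  have uV: "u \<in> V" using edge_V eE by blast
  from par_edge[OF eE reach[OF uV uV]] show ?thesis
  proof
    assume "par E u u u'" then show ?thesis using e u' unfolding Cu_def by blast
  next
    assume "par E u u' u" then show ?thesis using root_nopar by blast
  qed
qed

lemma Cu_nbr:
  assumes e: "{u, w} \<in> E" "{u, w} \<notin> R" and w: "w \<in> \<Union>R"
  shows "w \<in> Cu u"
proof -
  have uV: "u \<in> V" using edge_V e(1) by blast
  from par_edge[OF e(1) reach[OF uV uV]] show ?thesis
  proof
    assume "par E u u w" then show ?thesis using child_in[OF uV e w] by blast
  next
    assume "par E u w u" then show ?thesis using root_nopar by blast
  qed
qed

lemma Cu_card:
  assumes u: "u \<in> V"
  shows "card (Cu u) = card B + card R"
proof -
  define P where "P = {x. \<exists>y. {x, y} \<in> R \<and> par E u x y}"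
  define h where "h e = (SOME x. x \<in> e \<and> x \<in> P)" for e
  have he: "h e \<in> e \<and> h e \<in> P" if "e \<in> R" for e
  proof -
    have "e \<in> E" using that RE by blast
    then obtain a b where ab: "a \<noteq> b" "e = {a, b}" using edgeD by blast
    have eE: "{a, b} \<in> E" using that ab RE by blast
    have aV: "a \<in> V" using edge_V eE by blast
    have eR': "{b, a} \<in> R" using that ab by (simp add: insert_commute)
    have "\<exists>x. x \<in> e \<and> x \<in> P"
    proof (cases "par E u a b")
      case True then show ?thesis using that ab unfolding P_def by blast
    next
      case False
      then have "par E u b a" using par_edge[OF eE reach[OF aV u]] by blast
      then show ?thesis using eR' ab unfolding P_def by blast
    qed
    then show ?thesis unfolding h_def by (rule someI_ex)
  qed
  have inj: "inj_on h R"
  proof (rule inj_onI)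
    fix e1 e2 assume "e1 \<in> R" "e2 \<in> R" "h e1 = h e2"
    then have i: "h e1 \<in> e1 \<inter> e2" using he[of e1] he[of e2] by simp
    show "e1 = e2"
    proof (rule ccontr)
      assume "e1 \<noteq> e2"
      then have "e1 \<inter> e2 = {}" using Rdisj \<open>e1 \<in> R\<close> \<open>e2 \<in> R\<close> by blast
      then show False using i by simp
    qed
  qed
  have img: "h ` R = P"
  proof
    show "h ` R \<subseteq> P" using he by blast
  next
    show "P \<subseteq> h ` R"
    proof
      fix x assume "x \<in> P"
      then obtain y where y: "{x, y} \<in> R" "par E u x y" unfolding P_def by blast
      have "h {x, y} = x"
      proof (rule ccontr)
        assume "h {x, y} \<noteq> x"
        then have hy: "h {x, y} = y" using he[OF y(1)] by blast
        then have "y \<in> P" using he[OF y(1)] by simp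
        then obtain z where z: "{y, z} \<in> R" "par E u y z" unfolding P_def by blast
        have "{y, z} = {x, y}"
          using Rdisj[OF z(1) y(1)] by blast
        moreover have "y \<noteq> z" using edge_neq z(1) RE by blast
        ultimately have "z = x" by (auto simp: doubleton_eq_iff)
        then show False using par_not_both y(2) z(2) by blast
      qed
      then show "x \<in> h ` R" using y(1) by (metis image_eqI)
    qed
  qed
  have finP: "finite P"
  proof -
    have "P \<subseteq> V" unfolding P_def using RE edge_V by blast
    then show ?thesis using fin finite_subset by blast
  qed
  have cP: "card P = card R" using card_image[OF inj] img by simp
  have "B \<inter> P = {}" unfolding P_def using d1 by blast
  then have "card (B \<union> P) = card B + card P" using card_Un_disjoint finB finP by blast
  then show ?thesis unfolding Cu_def P_def[symmetric] using cP by simp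
qed

end



context tri
begin

definition r0 :: 'a where "r0 = (SOME r. r \<in> V)"

lemma r0V: "r0 \<in> V" unfolding r0_def using Vne by (simp add: some_in_eq)

lemma min_cover_iff:
  "min_vertex_cover V E C \<longleftrightarrow> vertex_cover V E C \<and> card C = card B + card R"
proof
  assume h: "min_vertex_cover V E C"
  then have c: "vertex_cover V E C" unfolding min_vertex_cover_def by blast
  have "card C \<le> card (Cu r0)" using h Cu_cover[OF r0V] unfolding min_vertex_cover_def by blast
  moreover have "card (Mr r0) \<le> card C" using dual[OF Mr_matching[OF r0V] c] .
  ultimately show "vertex_cover V E C \<and> card C = card B + card R"
    using c Cu_card[OF r0V] Mr_card[OF r0V] by simp
next
  assume h: "vertex_cover V E C \<and> card C = card B + card R"
  show "min_vertex_cover V E C" unfolding min_vertex_cover_def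
  proof (intro conjI allI impI)
    show "vertex_cover V E C" using h by blast
    fix C' assume "vertex_cover V E C'"
    then have "card (Mr r0) \<le> card C'" using dual[OF Mr_matching[OF r0V]] by blast
    then show "card C \<le> card C'" using h Mr_card[OF r0V] by simp
  qed
qed

lemma max_matching_iff:
  "max_matching E M \<longleftrightarrow> matching E M \<and> card M = card B + card R"
proof
  assume h: "max_matching E M"
  then have m: "matching E M" unfolding max_matching_def by blast
  have "card (Mr r0) \<le> card M" using h Mr_matching[OF r0V] unfolding max_matching_def by blast
  moreover have "card M \<le> card (Cu r0)" using dual[OF m Cu_cover[OF r0V]] .
  ultimately show "matching E M \<and> card M = card B + card R"
    using m Cu_card[OF r0V] Mr_card[OF r0V] by simp
next
  assume h: "matching E M \<and> card M = card B + card R"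
  show "max_matching E M" unfolding max_matching_def
  proof (intro conjI allI impI)
    show "matching E M" using h by blast
    fix M' assume "matching E M'"
    then have "card M' \<le> card (Cu r0)" using dual Cu_cover[OF r0V] by blast
    then show "card M' \<le> card M" using h Cu_card[OF r0V] by simp
  qed
qed

lemma Cu_min: "u \<in> V \<Longrightarrow> min_vertex_cover V E (Cu u)"
  using min_cover_iff Cu_cover Cu_card by blast

lemma Mr_max: "r \<in> V \<Longrightarrow> max_matching E (Mr r)"
  using max_matching_iff Mr_matching Mr_card by blast

lemma tight_min_max:
  assumes "min_vertex_cover V E C" "max_matching E M"
  shows "(\<forall>c\<in>C. \<exists>e\<in>M. c \<in> e) \<and> (\<forall>e\<in>M. \<forall>c1\<in>e \<inter> C. \<forall>c2\<in>e \<inter> C. c1 = c2)"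
proof -
  have "vertex_cover V E C" "card C = card B + card R" using assms(1) min_cover_iff by blast+
  moreover have "matching E M" "card M = card B + card R" using assms(2) max_matching_iff by blast+
  ultimately show ?thesis using tight[of M C] by simp
qed

lemma mincov_G: "min_vertex_cover V E C \<Longrightarrow> C \<inter> G = {}"
proof (rule ccontr)
  assume C: "min_vertex_cover V E C" and "C \<inter> G \<noteq> {}"
  then obtain g where g: "g \<in> C" "g \<in> G" by blast
  have gV: "g \<in> V" using g GV by blast
  have "\<forall>c\<in>C. \<exists>e\<in>Mr g. c \<in> e" using tight_min_max[OF C Mr_max[OF gV]] by (rule conjunct1)
  then obtain e where "e \<in> Mr g" "g \<in> e" using g(1) by blast
  then show False using Mr_root[OF g(2)] by blast
qed

lemma mincov_B: "min_vertex_cover V E C \<Longrightarrow> B \<subseteq> C"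
proof
  fix b assume C: "min_vertex_cover V E C" and b: "b \<in> B"
  obtain g where g: "g \<in> G" "{b, g} \<in> E" using two_gnb[OF b] by blast
  have "{b, g} \<inter> C \<noteq> {}" using C g unfolding min_vertex_cover_def vertex_cover_def by blast
  moreover have "g \<notin> C" using mincov_G[OF C] g by blast
  ultimately show "b \<in> C" by blast
qed

lemma mincov_R: "min_vertex_cover V E C \<Longrightarrow> e \<in> R \<Longrightarrow> \<not> e \<subseteq> C"
proof
  assume C: "min_vertex_cover V E C" and e: "e \<in> R" and sub: "e \<subseteq> C"
  have "e \<in> E" using e RE by blast
  then obtain x y where xy: "x \<noteq> y" "e = {x, y}" using edgeD by blast
  have "e \<in> Mr r0" using e unfolding Mr_def by blast
  moreover have "\<forall>e\<in>Mr r0. \<forall>c1\<in>e \<inter> C. \<forall>c2\<in>e \<inter> C. c1 = c2"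
    using tight_min_max[OF C Mr_max[OF r0V]] by (rule conjunct2)
  moreover have "x \<in> e \<inter> C" "y \<in> e \<inter> C" using sub xy by auto
  ultimately have "x = y" by blast
  then show False using xy by blast
qed

lemma pos_vb: "pos_vertex_backbone V E = B"
proof
  show "pos_vertex_backbone V E \<subseteq> B"
  proof
    fix v assume "v \<in> pos_vertex_backbone V E"
    then have v: "v \<in> V" "\<And>C. min_vertex_cover V E C \<Longrightarrow> v \<in> C"
      unfolding pos_vertex_backbone_def by blast+
    have "v \<notin> G" using v(2)[OF Cu_min[OF r0V]] mincov_G[OF Cu_min[OF r0V]] by blast
    moreover have "v \<notin> \<Union>R"
    proof
      assume "v \<in> \<Union>R"
      then obtain e where e: "e \<in> R" "v \<in> e" by blast
      then obtain v' where v': "v' \<noteq> v" "e = {v, v'}" using edge_other RE by blast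
      have v'R: "v' \<in> \<Union>R" using e v' by blast
      have v'V: "v' \<in> V" using v'R RE edge_V e v' by blast
      have "v' \<in> Cu v'" using Cu_self[OF v'R] .
      moreover have "v \<in> Cu v'" using v(2)[OF Cu_min[OF v'V]] .
      ultimately have "e \<subseteq> Cu v'" using v' by blast
      then show False using mincov_R[OF Cu_min[OF v'V] e(1)] by blast
    qed
    ultimately show "v \<in> B" using v(1) cov by blast
  qed
next
  show "B \<subseteq> pos_vertex_backbone V E"
    unfolding pos_vertex_backbone_def using BV mincov_B by blast
qed

lemma neg_vb: "neg_vertex_backbone V E = G"
proof
  show "neg_vertex_backbone V E \<subseteq> G"
  proof
    fix v assume "v \<in> neg_vertex_backbone V E"
    then have v: "v \<in> V" "\<And>C. min_vertex_cover V E C \<Longrightarrow> v \<notin> C"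
      unfolding neg_vertex_backbone_def by blast+
    have "v \<notin> B" using v(2)[OF Cu_min[OF r0V]] unfolding Cu_def by blast
    moreover have "v \<notin> \<Union>R"
    proof
      assume vR: "v \<in> \<Union>R"
      then have "v \<in> Cu v" by (rule Cu_self)
      then show False using v(2)[OF Cu_min[OF v(1)]] by blast
    qed
    ultimately show "v \<in> G" using v(1) cov by blast
  qed
next
  show "G \<subseteq> neg_vertex_backbone V E"
    unfolding neg_vertex_backbone_def using GV mincov_G by blast
qed

lemma degen_iff: "degenerate V E v \<longleftrightarrow> v \<in> \<Union>R"
  unfolding degenerate_def pos_vb neg_vb using cov d1 d3 by blast

lemma excl: "exclusive_edges V E = R"
proof
  show "exclusive_edges V E \<subseteq> R"
  proof
    fix e assume "e \<in> exclusive_edges V E"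
    then have e: "e \<in> E" "\<And>v. v \<in> e \<Longrightarrow> v \<in> \<Union>R"
      and nC: "\<not> (\<exists>C. min_vertex_cover V E C \<and> e \<subseteq> C)"
      unfolding exclusive_edges_def degen_iff by blast+
    obtain x y where xy: "x \<noteq> y" "e = {x, y}" using edgeD[OF e(1)] by blast
    show "e \<in> R"
    proof (rule ccontr)
      assume nR: "e \<notin> R"
      have xR: "x \<in> \<Union>R" and yR: "y \<in> \<Union>R" using e(2) xy by blast+
      have xV: "x \<in> V" using xy e(1) edge_V by blast
      have "y \<in> Cu x" using Cu_nbr[of x y] e(1) nR xy yR by blast
      moreover have "x \<in> Cu x" using Cu_self[OF xR] .
      ultimately have "e \<subseteq> Cu x" using xy by blast
      then show False using nC Cu_min[OF xV] by blast
    qed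
  qed
next
  show "R \<subseteq> exclusive_edges V E"
    unfolding exclusive_edges_def degen_iff using RE mincov_R by blast
qed

lemma pos_eb: "pos_edge_backbone E = R"
proof
  show "R \<subseteq> pos_edge_backbone E"
  proof
    fix e assume e: "e \<in> R"
    have eE: "e \<in> E" using e RE by blast
    obtain x y where xy: "x \<noteq> y" "e = {x, y}" using edgeD[OF eE] by blast
    have xR: "x \<in> \<Union>R" using e xy by blast
    have xV: "x \<in> V" using xy eE edge_V by blast
    have "e \<in> M" if M: "max_matching E M" for M
    proof -
      note t = tight_min_max[OF Cu_min[OF xV] M]
      have xC: "x \<in> Cu x" using Cu_self[OF xR] .
      have t1: "\<forall>c\<in>Cu x. \<exists>e\<in>M. c \<in> e" using t by (rule conjunct1)
      have t2: "\<forall>e\<in>M. \<forall>c1\<in>e \<inter> Cu x. \<forall>c2\<in>e \<inter> Cu x. c1 = c2" using t by (rule conjunct2)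
      obtain e' where e': "e' \<in> M" "x \<in> e'" using t1 xC by blast
      have e'E: "e' \<in> E" using e' M unfolding max_matching_def matching_def by blast
      obtain z where z: "z \<noteq> x" "e' = {x, z}" using edge_other[OF e'E e'(2)] by blast
      show "e \<in> M"
      proof (cases "z = y")
        case True then show ?thesis using e' z xy by simp
      next
        case False
        have zC: "z \<notin> Cu x"
        proof
          assume "z \<in> Cu x"
          moreover have "x \<in> e' \<inter> Cu x" using e' xC by blast
          ultimately have "z \<in> e' \<inter> Cu x" using z by blast
          then have "x = z" using t2 e'(1) \<open>x \<in> e' \<inter> Cu x\<close> by blast
          then show False using z by simp
        qed
        have zV: "z \<in> V" using e'E z edge_V by blast
        have "z \<notin> B" using zC unfolding Cu_def by blast
        moreover have "z \<notin> G"
        proof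
          assume "z \<in> G"
          then have "x \<in> B" using Gnb[OF e'E] z by blast
          then show False using xR d1 by blast
        qed
        moreover have "z \<notin> \<Union>R"
        proof
          assume zR: "z \<in> \<Union>R"
          show False
          proof (cases "e' \<in> R")
            case True
            have "e' \<noteq> e" using z xy False by (auto simp: doubleton_eq_iff)
            then have "e' \<inter> e = {}" using Rdisj True e by blast
            then show False using e' xy by blast
          next
            case nR: False
            have "z \<in> Cu x" using Cu_nbr[of x z] e'E z nR zR by blast
            then show False using zC by blast
          qed
        qed
        ultimately show ?thesis using zV cov by blast
      qed
    qed
    then show "e \<in> pos_edge_backbone E" unfolding pos_edge_backbone_def using eE by blast
  qed
next
  show "pos_edge_backbone E \<subseteq> R"
  proof
    fix e assume "e \<in> pos_edge_backbone E"
    then have e: "e \<in> E" "\<And>M. max_matching E M \<Longrightarrow> e \<in> M"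
      unfolding pos_edge_backbone_def by blast+
    show "e \<in> R"
    proof (rule ccontr)
      assume nR: "e \<notin> R"
      obtain a b where ab: "a \<noteq> b" "e = {a, b}" using edgeD[OF e(1)] by blast
      define x where "x = (if a \<in> G then a else b)"
      have xe: "x \<in> e" using ab x_def by simp
      have xG: "e \<inter> G \<noteq> {} \<Longrightarrow> x \<in> G" using ab x_def by auto
      have xV: "x \<in> V" using xe e(1) edge_V ab by blast
      have "e \<in> Mr x" using e(2)[OF Mr_max[OF xV]] .
      then obtain c where c: "c \<in> B" "e = {c, gc x c}" using nR unfolding Mr_def by blast
      have gcp: "gc x c \<in> G" "par E x c (gc x c)" using gc_props[OF xV c(1)] by blast+
      then have "x \<in> G" using xG c by blast
      then have "x \<noteq> c" using c d2 by blast
      then have "x = gc x c" using xe c by blast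
      then show False using gcp root_nopar by metis
    qed
  qed
qed

lemma opt: "optional_vertices V E = G"
proof
  show "G \<subseteq> optional_vertices V E"
  proof
    fix g assume g: "g \<in> G"
    have gV: "g \<in> V" using g GV by blast
    show "g \<in> optional_vertices V E"
      unfolding optional_vertices_def using gV Mr_max[OF gV] Mr_root[OF g] by blast
  qed
next
  show "optional_vertices V E \<subseteq> G"
  proof
    fix v assume "v \<in> optional_vertices V E"
    then obtain M where v: "v \<in> V" "max_matching E M" "\<And>e. e \<in> M \<Longrightarrow> v \<notin> e"
      unfolding optional_vertices_def by blast
    have "v \<notin> B"
    proof
      assume "v \<in> B"
      then have "v \<in> Cu r0" unfolding Cu_def by blast
      moreover have "\<forall>c\<in>Cu r0. \<exists>e\<in>M. c \<in> e" using tight_min_max[OF Cu_min[OF r0V] v(2)] by (rule conjunct1)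
      ultimately obtain e where "e \<in> M" "v \<in> e" by blast
      then show False using v(3) by blast
    qed
    moreover have "v \<notin> \<Union>R"
    proof
      assume "v \<in> \<Union>R"
      then obtain e where e: "e \<in> R" "v \<in> e" by blast
      then have "e \<in> M" using pos_eb v(2) unfolding pos_edge_backbone_def by blast
      then show False using v(3) e by blast
    qed
    ultimately show "v \<in> G" using v(1) cov by blast
  qed
qed

lemma unav: "unavoidable_vertices V E = B"
  unfolding unavoidable_vertices_def opt pos_eb using cov d1 d2 BV by blast

lemma triple_i_eq: "triple_i V E = (B, R, G)"
  unfolding triple_i_def pos_vb excl neg_vb by simp

lemma triple_ii_eq: "triple_ii V E = (B, R, G)"
  unfolding triple_ii_def unav pos_eb opt by simp

end



context forest
begin

lemma reach_V: "(v, r) \<in> (adj_rel E)\<^sup>* \<Longrightarrow> r \<in> V \<Longrightarrow> v \<in> V"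
proof -
  assume h: "(v, r) \<in> (adj_rel E)\<^sup>*" "r \<in> V"
  from h(1) show "v \<in> V"
  proof (cases rule: converse_rtranclE)
    case base then show ?thesis using h(2) by simp
  next
    case (step y)
    then have "{v, y} \<in> E" by (simp add: adj_rel_iff)
    then show ?thesis using edge_V by blast
  qed
qed

lemma special:
  assumes ne: "E \<noteq> {}"
  shows "\<exists>p L. p \<in> V \<and> L \<noteq> {} \<and> (\<forall>c\<in>L. {p, c} \<in> E \<and> (\<forall>y. {c, y} \<in> E \<longrightarrow> y = p)) \<and>
     (\<forall>q1 q2. {p, q1} \<in> E \<longrightarrow> {p, q2} \<in> E \<longrightarrow> q1 \<notin> L \<longrightarrow> q2 \<notin> L \<longrightarrow> q1 = q2)"
proof -
  obtain e where e: "e \<in> E" using ne by blast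
  then obtain a b where ab: "a \<in> V" "b \<in> V" "a \<noteq> b" "e = {a, b}" using edgeD by blast
  define r where "r = a"
  define K where "K = {v. (v, r) \<in> (adj_rel E)\<^sup>*}"
  have KV: "K \<subseteq> V" unfolding K_def using reach_V ab(1) r_def by blast
  have finK: "finite K" using KV fin finite_subset by blast
  have ba: "{b, a} \<in> E" using e ab by (simp add: insert_commute)
  have bK: "b \<in> K"
  proof -
    have "(a, r) \<in> (adj_rel E)\<^sup>*" unfolding r_def by simp
    then show ?thesis unfolding K_def using rt_step[OF ba] by blast
  qed
  have "dist E r ` K \<noteq> {}" using bK by blast
  then obtain w where wK: "w \<in> K" and wmax: "dist E r w = Max (dist E r ` K)"
    using Max_in[of "dist E r ` K"] finK by (metis finite_imageI imageE)
  have maxle: "dist E r v \<le> dist E r w" if "v \<in> K" for v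
    using wmax that finK by simp
  have db: "dist E r b \<noteq> 0"
  proof
    assume "dist E r b = 0"
    then have "(b, r) \<in> (adj_rel E) ^^ 0" using dist_ex[of b r] bK unfolding K_def by (metis mem_Collect_eq)
    then show False using ab r_def by simp
  qed
  have "w \<noteq> r"
  proof
    assume "w = r"
    then have "dist E r w = 0" using dist_root by simp
    then show False using maxle[OF bK] db by simp
  qed
  then obtain p where p: "par E r p w" "dist E r p < dist E r w"
    using par_exists[of w r] wK unfolding K_def by blast
  have pK: "p \<in> K"
  proof -
    have "(p, r) \<in> (adj_rel (E - {{p, w}}))\<^sup>*" using p(1) unfolding par_def by blast
    then show ?thesis unfolding K_def using rt_mono[of "E - {{p, w}}" E p r] by blast
  qed
  have pr: "(p, r) \<in> (adj_rel E)\<^sup>*" using pK unfolding K_def by blast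
  have childK: "c \<in> K" if "{c, x} \<in> E" "x \<in> K" for c x
    using rt_step[OF that(1)] that(2) unfolding K_def by blast
  have leafy: "\<forall>y. {c, y} \<in> E \<longrightarrow> y = x"
    if c: "c \<in> K" "dist E r c = dist E r w" "par E r x c" for c x
  proof (intro allI impI)
    fix y assume cy: "{c, y} \<in> E"
    have cr: "(c, r) \<in> (adj_rel E)\<^sup>*" using c(1) unfolding K_def by blast
    have yc: "{y, c} \<in> E" using cy by (simp add: insert_commute)
    from par_edge[OF cy cr] show "y = x"
    proof
      assume pc: "par E r c y"
      have yK: "y \<in> K" using childK[OF yc c(1)] .
      then have "(y, r) \<in> (adj_rel E)\<^sup>*" unfolding K_def by blast
      then have "dist E r c < dist E r y" using par_less[OF pc] by blast
      then show ?thesis using maxle[OF yK] c(2) by simp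
    next
      assume "par E r y c"
      then show ?thesis using par_unique c(3) by blast
    qed
  qed
  define L where "L = {c. par E r p c}"
  have wL: "w \<in> L" using p(1) L_def by simp
  have dw: "dist E r w \<le> Suc (dist E r p)"
    using dist_step[OF _ pr, of w] p(1) unfolding par_def by (simp add: insert_commute)
  have Lprop: "{p, c} \<in> E \<and> (\<forall>y. {c, y} \<in> E \<longrightarrow> y = p)" if "c \<in> L" for c
  proof -
    have pc: "par E r p c" using that L_def by simp
    then have e1: "{p, c} \<in> E" unfolding par_def by blast
    then have e2: "{c, p} \<in> E" by (simp add: insert_commute)
    have cK: "c \<in> K" using childK[OF e2 pK] .
    have cr: "(c, r) \<in> (adj_rel E)\<^sup>*" using cK unfolding K_def by blast
    have "dist E r p < dist E r c" using par_less[OF pc cr] .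
    moreover have "dist E r c \<le> Suc (dist E r p)" using dist_step[OF e2 pr] .
    ultimately have "dist E r c = dist E r w" using dw p(2) by simp
    then show ?thesis using leafy[OF cK _ pc] e1 by blast
  qed
  have pV: "p \<in> V" using pK KV by blast
  have Q: "q1 = q2" if q: "{p, q1} \<in> E" "{p, q2} \<in> E" "q1 \<notin> L" "q2 \<notin> L" for q1 q2
  proof -
    have "par E r q1 p" using par_edge[OF q(1) pr] q(3) L_def by blast
    moreover have "par E r q2 p" using par_edge[OF q(2) pr] q(4) L_def by blast
    ultimately show ?thesis using par_unique by blast
  qed
  show ?thesis
    apply (rule exI[of _ p], rule exI[of _ L])
    using pV wL Lprop Q by blast
qed

end

lemma card2: "a \<noteq> b \<Longrightarrow> a \<in> A \<Longrightarrow> b \<in> A \<Longrightarrow> finite A \<Longrightarrow> 2 \<le> card A"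
proof -
  assume h: "a \<noteq> b" "a \<in> A" "b \<in> A" "finite A"
  then have "card {a, b} \<le> card A" by (intro card_mono) auto
  then show ?thesis using h(1) by simp
qed

lemma exists_iii:
  "finite V \<Longrightarrow> simple_graph V E \<Longrightarrow> acyclic_graph E \<Longrightarrow> \<exists>T. cond_iii V E T"
proof (induction "card V" arbitrary: V E rule: less_induct)
  case less
  interpret forest V E using less.prems by unfold_locales
  show ?case
  proof (cases "E = {}")
    case True
    have "cond_iii V E ({}, {}, V)"
      unfolding cond_iii_def tricoloring_def using True by auto
    then show ?thesis by blast
  next
    case False
    then obtain p L where pL: "p \<in> V" "L \<noteq> {}"
      and Lp: "\<And>c. c \<in> L \<Longrightarrow> {p, c} \<in> E"
      and Ll: "\<And>c y. c \<in> L \<Longrightarrow> {c, y} \<in> E \<Longrightarrow> y = p"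
      and Q: "\<And>q1 q2. {p, q1} \<in> E \<Longrightarrow> {p, q2} \<in> E \<Longrightarrow> q1 \<notin> L \<Longrightarrow> q2 \<notin> L \<Longrightarrow> q1 = q2"
      using special by metis
    define S where "S = insert p L"
    define V' where "V' = V - S"
    define E' where "E' = {e \<in> E. e \<inter> S = {}}"
    have LV: "L \<subseteq> V" using Lp edge_V by blast
    have pnL: "p \<notin> L" using Lp edge_neq by blast
    have SV: "S \<subseteq> V" using LV pL S_def by blast
    have E'E: "E' \<subseteq> E" unfolding E'_def by blast
    have finV': "finite V'" using fin V'_def by simp
    have cardlt: "card V' < card V"
    proof -
      have "V' \<subset> V" using pL V'_def S_def by blast
      then show ?thesis using fin by (simp add: psubset_card_mono)
    qed
    have sg': "simple_graph V' E'"
      unfolding simple_graph_def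
    proof
      fix e assume "e \<in> E'"
      then have e: "e \<in> E" "e \<inter> S = {}" unfolding E'_def by blast+
      then obtain x y where "x \<in> V" "y \<in> V" "x \<noteq> y" "e = {x, y}" using edgeD by blast
      then show "\<exists>x y. x \<in> V' \<and> y \<in> V' \<and> x \<noteq> y \<and> e = {x, y}"
        using e(2) unfolding V'_def by blast
    qed
    have acy': "acyclic_graph E'"
      using acy E'E unfolding acyclic_graph_def is_cycle_def by blast
    obtain B' R' G' where T': "cond_iii V' E' (B', R', G')"
      using less.hyps[OF cardlt finV' sg' acy'] by (metis prod_cases3)
    have BV': "B' \<subseteq> V'" and RE': "R' \<subseteq> E'" and GV': "G' \<subseteq> V'"
      and cov': "B' \<union> \<Union>R' \<union> G' = V'" and d1': "B' \<inter> \<Union>R' = {}" and d2': "B' \<inter> G' = {}"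
      and d3': "\<Union>R' \<inter> G' = {}"
      and Rd': "\<And>e1 e2. e1 \<in> R' \<Longrightarrow> e2 \<in> R' \<Longrightarrow> e1 \<noteq> e2 \<Longrightarrow> e1 \<inter> e2 = {}"
      and Gn': "\<And>e g. e \<in> E' \<Longrightarrow> g \<in> G' \<Longrightarrow> g \<in> e \<Longrightarrow> e - {g} \<subseteq> B'"
      and Bd': "\<And>b. b \<in> B' \<Longrightarrow> 2 \<le> card {e \<in> E'. b \<in> e \<and> e \<inter> G' \<noteq> {}}"
      using T' unfolding cond_iii_def tricoloring_def by auto
    have RV': "\<Union>R' \<subseteq> V'" using cov' by blast
    have EL: "e = {p, c}" if h: "e \<in> E" "c \<in> L" "c \<in> e" for e c
    proof -
      obtain y where y: "y \<noteq> c" "e = {c, y}" using edge_other[OF h(1) h(3)] by blast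
      then have "y = p" using Ll[OF h(2)] h(1) by blast
      then show ?thesis using y by (simp add: insert_commute)
    qed
    have EP: "\<exists>y. y \<noteq> p \<and> e = {p, y}" if "e \<in> E" "p \<in> e" for e
      using edge_other[OF that] .
    have notE': "e \<inter> S \<noteq> {}" if "e \<in> E" "e \<notin> E'" for e
      using that unfolding E'_def by blast
    have finE2: "finite {e \<in> E. b \<in> e \<and> e \<inter> X \<noteq> {}}" for b X
      using finE by simp
    show ?thesis
    proof (cases "(\<exists>c1 c2. c1 \<in> L \<and> c2 \<in> L \<and> c1 \<noteq> c2) \<or> (\<exists>q. {p, q} \<in> E \<and> q \<notin> L \<and> q \<in> G')")
      case True
      define T where "T = (insert p B', R', G' \<union> L)"
      have "cond_iii V E T"
        unfolding cond_iii_def T_def prod.case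
      proof (intro conjI ballI impI)
        show "tricoloring V E (insert p B', R', G' \<union> L)"
          unfolding tricoloring_def prod.case
        proof (intro conjI)
          show "insert p B' \<subseteq> V" using BV' pL V'_def by blast
          show "R' \<subseteq> E" using RE' E'E by blast
          show "G' \<union> L \<subseteq> V" using GV' LV V'_def by blast
          show "insert p B' \<union> \<Union>R' \<union> (G' \<union> L) = V"
          proof -
            have "insert p B' \<union> \<Union>R' \<union> (G' \<union> L) = (B' \<union> \<Union>R' \<union> G') \<union> S"
              unfolding S_def by blast
            also have "\<dots> = V" using cov' SV unfolding V'_def by blast
            finally show ?thesis .
          qed
          show "insert p B' \<inter> \<Union>R' = {}" using d1' RV' pL V'_def S_def by blast
          show "insert p B' \<inter> (G' \<union> L) = {}" using d2' BV' GV' pnL V'_def S_def by blast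
          show "\<Union>R' \<inter> (G' \<union> L) = {}" using d3' RV' V'_def S_def by blast
        qed
      next
        fix e1 e2 assume "e1 \<in> R'" "e2 \<in> R'" "e1 \<noteq> e2"
        then show "e1 \<inter> e2 = {}" by (rule Rd')
      next
        fix e g assume e: "e \<in> E" and g: "g \<in> G' \<union> L" "g \<in> e"
        show "e - {g} \<subseteq> insert p B'"
        proof (cases "g \<in> L")
          case True
          then show ?thesis using EL[OF e True g(2)] by blast
        next
          case gL: False
          then have gG: "g \<in> G'" using g by blast
          then have gS: "g \<notin> S" using GV' V'_def by blast
          show ?thesis
          proof (cases "e \<in> E'")
            case True
            then show ?thesis using Gn'[OF True gG g(2)] by blast
          next
            case False
            then obtain s where s: "s \<in> e" "s \<in> S" using notE'[OF e] by blast
            show ?thesis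
            proof (cases "s \<in> L")
              case True
              then have "e = {p, s}" using EL[OF e True s(1)] by blast
              then show ?thesis using g(2) gS True S_def by blast
            next
              case False
              then have "s = p" using s S_def by blast
              then obtain y where "y \<noteq> p" "e = {p, y}" using EP[OF e] s by blast
              then show ?thesis using g(2) gS S_def by blast
            qed
          qed
        qed
      next
        fix b assume b: "b \<in> insert p B'"
        show "2 \<le> card {e \<in> E. b \<in> e \<and> e \<inter> (G' \<union> L) \<noteq> {}}"
        proof (cases "b \<in> B'")
          case True
          have "{e \<in> E'. b \<in> e \<and> e \<inter> G' \<noteq> {}} \<subseteq> {e \<in> E. b \<in> e \<and> e \<inter> (G' \<union> L) \<noteq> {}}"
            using E'E by blast
          then have "card {e \<in> E'. b \<in> e \<and> e \<inter> G' \<noteq> {}} \<le> card {e \<in> E. b \<in> e \<and> e \<inter> (G' \<union> L) \<noteq> {}}"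
            using finE2 by (intro card_mono) auto
          then show ?thesis using Bd'[OF True] by simp
        next
          case False
          then have bp: "b = p" using b by blast
          from True show ?thesis
          proof
            assume "\<exists>c1 c2. c1 \<in> L \<and> c2 \<in> L \<and> c1 \<noteq> c2"
            then obtain c1 c2 where c: "c1 \<in> L" "c2 \<in> L" "c1 \<noteq> c2" by blast
            have ne: "{p, c1} \<noteq> {p, c2}" using c pnL by (auto simp: doubleton_eq_iff)
            show ?thesis
              by (rule card2[OF ne]) (use c Lp bp finE2 in auto)
          next
            assume "\<exists>q. {p, q} \<in> E \<and> q \<notin> L \<and> q \<in> G'"
            then obtain q where q: "{p, q} \<in> E" "q \<notin> L" "q \<in> G'" by blast
            obtain w where w: "w \<in> L" using pL by blast
            have ne: "{p, w} \<noteq> {p, q}" using w q pnL by (auto simp: doubleton_eq_iff)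
            show ?thesis
              by (rule card2[OF ne]) (use w q Lp bp finE2 in auto)
          qed
        qed
      qed
      then show ?thesis by blast
    next
      case False
      obtain w where w: "w \<in> L" using pL by blast
      have Lw: "L = {w}" using False w by blast
      have nq: "\<And>q. {p, q} \<in> E \<Longrightarrow> q \<notin> L \<Longrightarrow> q \<notin> G'" using False by blast
      have pw: "{p, w} \<in> E" using Lp w by blast
      have pnw: "p \<noteq> w" using pnL w by blast
      define T where "T = (B', insert {p, w} R', G')"
      have "cond_iii V E T"
        unfolding cond_iii_def T_def prod.case
      proof (intro conjI ballI impI)
        show "tricoloring V E (B', insert {p, w} R', G')"
          unfolding tricoloring_def prod.case
        proof (intro conjI)
          show "B' \<subseteq> V" using BV' V'_def by blast
          show "insert {p, w} R' \<subseteq> E" using RE' E'E pw by blast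
          show "G' \<subseteq> V" using GV' V'_def by blast
          show "B' \<union> \<Union>(insert {p, w} R') \<union> G' = V"
          proof -
            have "B' \<union> \<Union>(insert {p, w} R') \<union> G' = (B' \<union> \<Union>R' \<union> G') \<union> S"
              unfolding S_def Lw by blast
            also have "\<dots> = V" using cov' SV unfolding V'_def by blast
            finally show ?thesis .
          qed
          show "B' \<inter> \<Union>(insert {p, w} R') = {}" using d1' BV' V'_def S_def w by blast
          show "B' \<inter> G' = {}" using d2' .
          show "\<Union>(insert {p, w} R') \<inter> G' = {}" using d3' GV' V'_def S_def w by blast
        qed
      next
        fix e1 e2 assume e: "e1 \<in> insert {p, w} R'" "e2 \<in> insert {p, w} R'" "e1 \<noteq> e2"
        have pwR: "e \<inter> {p, w} = {}" if "e \<in> R'" for e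
          using that RV' unfolding V'_def S_def Lw by blast
        show "e1 \<inter> e2 = {}"
        proof (cases "e1 \<in> R' \<and> e2 \<in> R'")
          case True then show ?thesis using Rd' e(3) by blast
        next
          case False
          then have "(e1 = {p, w} \<and> e2 \<in> R') \<or> (e2 = {p, w} \<and> e1 \<in> R')" using e by blast
          then show ?thesis using pwR by blast
        qed
      next
        fix e g assume e: "e \<in> E" and g: "g \<in> G'" "g \<in> e"
        have gS: "g \<notin> S" using g GV' V'_def by blast
        show "e - {g} \<subseteq> B'"
        proof (cases "e \<in> E'")
          case True
          then show ?thesis using Gn'[OF True g] by blast
        next
          case False
          then obtain s where s: "s \<in> e" "s \<in> S" using notE'[OF e] by blast
          show ?thesis
          proof (cases "s \<in> L")
            case True
            then have "e = {p, s}" using EL[OF e True s(1)] by blast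
            then show ?thesis using g(2) gS True S_def by blast
          next
            case False
            then have "s = p" using s S_def by blast
            then obtain y where y: "y \<noteq> p" "e = {p, y}" using EP[OF e] s by blast
            then have "y = g" using g(2) gS S_def by blast
            then have "{p, g} \<in> E" "g \<notin> L" using y e gS S_def by blast+
            then show ?thesis using nq g(1) by blast
          qed
        qed
      next
        fix b assume b: "b \<in> B'"
        have "{e \<in> E'. b \<in> e \<and> e \<inter> G' \<noteq> {}} \<subseteq> {e \<in> E. b \<in> e \<and> e \<inter> G' \<noteq> {}}"
          using E'E by blast
        then have "card {e \<in> E'. b \<in> e \<and> e \<inter> G' \<noteq> {}} \<le> card {e \<in> E. b \<in> e \<and> e \<inter> G' \<noteq> {}}"
          using finE2 by (intro card_mono) auto
        then show "2 \<le> card {e \<in> E. b \<in> e \<and> e \<inter> G' \<noteq> {}}" using Bd'[OF b] by simp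
      qed
      then show ?thesis by blast
    qed
  qed
qed

lemma tri_char:
  assumes a1: "finite V" and a2: "simple_graph V E" and a3: "acyclic_graph E"
    and a4: "connected_graph V E" and a5: "V \<noteq> {}"
    and T: "cond_iii V E T"
  shows "triple_i V E = T \<and> triple_ii V E = T"
proof -
  obtain B R G where BRG: "T = (B, R, G)" using prod_cases3 by blast
  have c: "cond_iii V E (B, R, G)" using T BRG by simp
  interpret tri V E B R G
    by (rule tri.intro, rule forest.intro[OF a1 a2 a3], rule tri_axioms.intro[OF a4 a5 c])
  show ?thesis using triple_i_eq triple_ii_eq BRG by simp
qed

theorem theorem1:
  fixes V :: "'a set" and E :: "'a set set"
  assumes "finite_tree V E"
  shows "tricoloring V E (triple_i V E) \<and> tricoloring V E (triple_ii V E) \<and>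
         (\<exists>!T. cond_iii V E T) \<and>
         cond_iii V E (triple_i V E) \<and> triple_i V E = triple_ii V E"
proof -
  have a: "finite V" "V \<noteq> {}" "simple_graph V E" "connected_graph V E" "acyclic_graph E"
    using assms unfolding finite_tree_def by blast+
  obtain T where T: "cond_iii V E T" using exists_iii[OF a(1) a(3) a(5)] by blast
  have eq: "triple_i V E = T" "triple_ii V E = T" using tri_char[OF a(1,3,5,4,2) T] by blast+
  have tc: "tricoloring V E T" using T unfolding cond_iii_def by blast
  have uniq: "T' = T" if "cond_iii V E T'" for T'
  proof -
    have "triple_i V E = T'" using tri_char[OF a(1,3,5,4,2) that] by blast
    then show ?thesis using eq(1) by simp
  qed
  have ex1: "\<exists>!T. cond_iii V E T"
  proof (rule ex1I[of _ T])
    show "cond_iii V E T" by (rule T)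
  next
    fix T' assume "cond_iii V E T'" then show "T' = T" by (rule uniq)
  qed
  show ?thesis using eq tc T ex1 by simp
qed

end
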